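(* Let $\mathcal{P}$ be a data distribution on $\mathcal{X}\times[C]$, let $D_T$ be a fixed finite test set, and fix a training point $z_i$ that is either consistently helpful or consistently harmful (as defined in the context). Let $D_N$ be a random training set of size $n$ consisting of $z_i$ together with $n-1$ points drawn i.i.d. from $\mathcal{P}$ (written $D_N\sim\mathcal{P}^{n-1}|z_i$). For $k\in\{0,\dots,n-1\}$ let $\tau_k=\mathbb{E}_{D_N\sim\mathcal{P}^{n-1}|z_i}[\Delta^{D_N}_{z_i}(k,D_T)]$ and $\delta_k=\mathrm{Var}_{D_N\sim\mathcal{P}^{n-1}|z_i}(\Delta^{D_N}_{z_i}(k,D_T))$. Then the Shapley value instance attribution $g^{\mathrm{Shap}}$ is $\beta^{\mathrm{Shap}}$-robust and the leave-one-out instance attribution $g^{\mathrm{LOO}}$ is $\beta^{\mathrm{LOO}}$-robust for $z_i$, where $$\beta^{\mathrm{Shap}}\le \frac{n^{-1}\sum_{k=0}^{n-1}\delta_k}{\left(n^{-1}\sum_{k=0}^{n-1}\tau_k\right)^2}\qquad\text{and}\qquad \beta^{\mathrm{LOO}}\le\frac{\delta_{n-1}}{\tau_{n-1}^2}.$$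
   Context: Training set $D_N=\{z_j=(x_j,y_j)\}_{j\in N}$, $N=\{1,\dots,n\}$; test set $D_T$. For $S\subseteq N$, $f_S$ denotes the classifier obtained by training (by a fixed procedure) on $D_S=\{z_j:j\in S\}$, and the utility is the test accuracy $U(S,D_T)=\frac{1}{|D_T|}\sum_{(x_t,y_t)\in D_T}\mathbf{1}[f_S(x_t)=y_t]$. The marginal contribution of $z_i$ to subsets of size $k$ is $\Delta^{D_N}_{z_i}(k,D_T)=\binom{n-1}{k}^{-1}\sum_{S\subseteq N\setminus\{i\},\,|S|=k}\big(U(S\cup\{i\},D_T)-U(S,D_T)\big)$. LOO score: $g^{\mathrm{LOO}}(z_i,D_T,D_N)=\Delta^{D_N}_{z_i}(n-1,D_T)$. Shapley score: $g^{\mathrm{Shap}}(z_i,D_T,D_N)=n^{-1}\sum_{k=0}^{n-1}\Delta^{D_N}_{z_i}(k,D_T)$. $z_i$ is consistently helpful if $\tau_k\ge 0$ for all $k\in\{0,\dots,n-1\}$, and consistently harmful if $\tau_k<0$ for all such $k$. Define $\mathrm{sgn}(x)=-1$ if $x<0$ and $\mathrm{sgn}(x)=1$ if $x\ge 0$; set $\mathrm{sgn}^*(z_i)=1$ if $z_i$ is consistently helpful and $\mathrm{sgn}^*(z_i)=-1$ if consistently harmful. An attribution function $g$ is $\beta$-robust for $z_i$ if $\mathbb{P}_{D_N\sim\mathcal{P}^{n-1}|z_i}\big(\mathrm{sgn}(g(z_i,D_T,D_N))\neq\mathrm{sgn}^*(z_i)\big)=\beta$. *)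

theory Defs
  imports "HOL-Probability.Probability" "HOL-Library.Multiset"
begin

text \<open>A training set D_N is
  indexed by N = {1..n}, i.e. it is a function from indices to points.\<close>

definition test_acc :: "('x \<Rightarrow> 'y) \<Rightarrow> ('x \<times> 'y) list \<Rightarrow> real" where
  "test_acc f DT = (\<Sum>t\<leftarrow>DT. if f (fst t) = snd t then 1 else 0) / real (length DT)"

definition util ::
  "(('x \<times> 'y) multiset \<Rightarrow> ('x \<Rightarrow> 'y)) \<Rightarrow> (nat \<Rightarrow> 'x \<times> 'y) \<Rightarrow> nat set \<Rightarrow> ('x \<times> 'y) list \<Rightarrow> real" where
  "util train D S DT = test_acc (train (image_mset D (mset_set S))) DT"

definition marg_contrib ::
  "(('x \<times> 'y) multiset \<Rightarrow> ('x \<Rightarrow> 'y)) \<Rightarrow> nat \<Rightarrow> (nat \<Rightarrow> 'x \<times> 'y) \<Rightarrow> nat \<Rightarrow> nat \<Rightarrow> ('x \<times> 'y) list \<Rightarrow> real" where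
  "marg_contrib train n D i k DT =
     (\<Sum>S\<in>{S. S \<subseteq> {1..n} - {i} \<and> card S = k}. util train D (S \<union> {i}) DT - util train D S DT)
     / real ((n - 1) choose k)"

definition g_LOO ::
  "(('x \<times> 'y) multiset \<Rightarrow> ('x \<Rightarrow> 'y)) \<Rightarrow> nat \<Rightarrow> (nat \<Rightarrow> 'x \<times> 'y) \<Rightarrow> nat \<Rightarrow> ('x \<times> 'y) list \<Rightarrow> real" where
  "g_LOO train n D i DT = marg_contrib train n D i (n - 1) DT"

definition g_Shap ::
  "(('x \<times> 'y) multiset \<Rightarrow> ('x \<Rightarrow> 'y)) \<Rightarrow> nat \<Rightarrow> (nat \<Rightarrow> 'x \<times> 'y) \<Rightarrow> nat \<Rightarrow> ('x \<times> 'y) list \<Rightarrow> real" where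
  "g_Shap train n D i DT = (\<Sum>k<n. marg_contrib train n D i k DT) / real n"

definition sgn_pm :: "real \<Rightarrow> real" where
  "sgn_pm x = (if x < 0 then -1 else 1)"

text \<open>Random training set: z_i at index i, the other n-1 indices i.i.d. from P.\<close>
definition train_space :: "('x \<times> 'y) measure \<Rightarrow> nat \<Rightarrow> nat \<Rightarrow> (nat \<Rightarrow> 'x \<times> 'y) measure" where
  "train_space P n i = PiM ({1..n} - {i}) (\<lambda>_. P)"

definition tau ::
  "('x \<times> 'y) measure \<Rightarrow> (('x \<times> 'y) multiset \<Rightarrow> ('x \<Rightarrow> 'y)) \<Rightarrow> nat \<Rightarrow> nat \<Rightarrow> 'x \<times> 'y \<Rightarrow> ('x \<times> 'y) list \<Rightarrow> nat \<Rightarrow> real" where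
  "tau P train n i z DT k =
     prob_space.expectation (train_space P n i) (\<lambda>\<omega>. marg_contrib train n (fun_upd \<omega> i z) i k DT)"

definition delta ::
  "('x \<times> 'y) measure \<Rightarrow> (('x \<times> 'y) multiset \<Rightarrow> ('x \<Rightarrow> 'y)) \<Rightarrow> nat \<Rightarrow> nat \<Rightarrow> 'x \<times> 'y \<Rightarrow> ('x \<times> 'y) list \<Rightarrow> nat \<Rightarrow> real" where
  "delta P train n i z DT k =
     prob_space.variance (train_space P n i) (\<lambda>\<omega>. marg_contrib train n (fun_upd \<omega> i z) i k DT)"

definition consistently_helpful where
  "consistently_helpful P train n i z DT \<longleftrightarrow> (\<forall>k<n. tau P train n i z DT k \<ge> 0)"

definition consistently_harmful where
  "consistently_harmful P train n i z DT \<longleftrightarrow> (\<forall>k<n. tau P train n i z DT k < 0)"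

definition sgn_star where
  "sgn_star P train n i z DT = (if consistently_helpful P train n i z DT then 1 else (-1::real))"

definition robust_beta ::
  "('x \<times> 'y) measure \<Rightarrow> (('x \<times> 'y) multiset \<Rightarrow> ('x \<Rightarrow> 'y)) \<Rightarrow> nat \<Rightarrow> nat \<Rightarrow> 'x \<times> 'y \<Rightarrow> ('x \<times> 'y) list
   \<Rightarrow> ((nat \<Rightarrow> 'x \<times> 'y) \<Rightarrow> real) \<Rightarrow> real" where
  "robust_beta P train n i z DT g =
     measure (train_space P n i)
       {\<omega> \<in> space (train_space P n i). sgn_pm (g (fun_upd \<omega> i z)) \<noteq> sgn_star P train n i z DT}"

end

theory Submission
  imports Defs
begin

lemma (in prob_space) sign_err:
  fixes f :: "'a \<Rightarrow> real"
  assumes fm: "f \<in> borel_measurable M"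
    and bnd: "\<And>x. x \<in> space M \<Longrightarrow> \<bar>f x\<bar> \<le> B"
    and mu: "mu = expectation f" and nz: "mu \<noteq> 0"
    and V: "expectation (\<lambda>x. (f x - mu)\<^sup>2) \<le> V"
    and s1: "mu \<ge> 0 \<Longrightarrow> s = 1" and s2: "mu < 0 \<Longrightarrow> s = -1"
  shows "prob {x\<in>space M. sgn_pm (f x) \<noteq> s} \<le> V / mu\<^sup>2"
proof -
  have int2: "integrable M (\<lambda>x. f x ^ 2)"
  proof (rule integrable_const_bound[where B="B^2"])
    show "AE x in M. norm (f x ^ 2) \<le> B^2"
    proof (rule AE_I2)
      fix x assume "x \<in> space M"
      then have "\<bar>f x\<bar> \<le> B" by (rule bnd)
      then have "\<bar>f x\<bar>^2 \<le> B^2" by (rule power_mono) simp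
      then show "norm (f x ^ 2) \<le> B^2" by simp
    qed
  qed (use fm in simp)
  have sub: "{x\<in>space M. sgn_pm (f x) \<noteq> s} \<subseteq> {x\<in>space M. \<bar>f x - mu\<bar> \<ge> \<bar>mu\<bar>}"
  proof
    fix x assume "x \<in> {x\<in>space M. sgn_pm (f x) \<noteq> s}"
    then have x: "x \<in> space M" "sgn_pm (f x) \<noteq> s" by auto
    show "x \<in> {x\<in>space M. \<bar>f x - mu\<bar> \<ge> \<bar>mu\<bar>}"
    proof (cases "mu \<ge> 0")
      case True
      then have "s = 1" by (rule s1)
      with x have "f x < 0" by (auto simp: sgn_pm_def split: if_splits)
      with True x show ?thesis by auto
    next
      case False
      then have "s = -1" using s2 by simp
      with x have "f x \<ge> 0" by (auto simp: sgn_pm_def split: if_splits)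
      with False x show ?thesis by auto
    qed
  qed
  have "prob {x\<in>space M. sgn_pm (f x) \<noteq> s} \<le> prob {x\<in>space M. \<bar>f x - mu\<bar> \<ge> \<bar>mu\<bar>}"
    by (rule finite_measure_mono[OF sub]) (use fm in measurable)
  also have "\<dots> \<le> variance f / \<bar>mu\<bar>\<^sup>2"
    unfolding mu by (rule Chebyshev_inequality) (use fm int2 nz mu in auto)
  also have "\<dots> \<le> V / mu\<^sup>2"
    using V mu nz by (simp add: divide_right_mono)
  finally show ?thesis .
qed

lemma (in prob_space) bdd_int:
  fixes g :: "'a \<Rightarrow> real"
  assumes "g \<in> borel_measurable M" "\<And>x. x \<in> space M \<Longrightarrow> \<bar>g x\<bar> \<le> B"
  shows "integrable M g"
  by (rule integrable_const_bound[where B=B]) (use assms in auto)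

lemma sq_bound:
  fixes a c :: real
  assumes "\<bar>a\<bar> \<le> 1"
  shows "\<bar>(a - c)\<^sup>2\<bar> \<le> (1 + \<bar>c\<bar>)\<^sup>2"
proof -
  have "\<bar>a - c\<bar> \<le> 1 + \<bar>c\<bar>" using assms by linarith
  then have "\<bar>a - c\<bar>\<^sup>2 \<le> (1 + \<bar>c\<bar>)\<^sup>2" by (rule power_mono) simp
  then show ?thesis by simp
qed

lemma test_acc_bounds: "0 \<le> test_acc f DT" "test_acc f DT \<le> 1"
proof -
  have a: "0 \<le> (\<Sum>t\<leftarrow>DT. if f (fst t) = snd t then 1 else (0::real))"
    by (induction DT) auto
  have b: "(\<Sum>t\<leftarrow>DT. if f (fst t) = snd t then 1 else (0::real)) \<le> real (length DT)"
    by (induction DT) auto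
  show "0 \<le> test_acc f DT" unfolding test_acc_def using a by simp
  show "test_acc f DT \<le> 1" unfolding test_acc_def using a b
    by (cases "DT = []") (auto simp: divide_le_eq)
qed

lemma util_bounds: "0 \<le> util train D S DT" "util train D S DT \<le> 1"
  unfolding util_def by (rule test_acc_bounds)+

lemma marg_bound:
  assumes "i \<in> {1..n}"
  shows "\<bar>marg_contrib train n D i k DT\<bar> \<le> 1"
proof -
  let ?F = "{S. S \<subseteq> {1..n} - {i} \<and> card S = k}"
  let ?s = "\<Sum>S\<in>?F. util train D (S \<union> {i}) DT - util train D S DT"
  have c1: "card ({1..n} - {i}) = card {1..n} - 1"
    using assms by (intro card_Diff_singleton) auto
  have cardF: "card ?F = (n - 1) choose k"
  proof -
    have "card ?F = card ({1..n} - {i}) choose k" by (rule n_subsets) simp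
    then show ?thesis using c1 by simp
  qed
  have "\<bar>?s\<bar> \<le> (\<Sum>S\<in>?F. \<bar>util train D (S \<union> {i}) DT - util train D S DT\<bar>)"
    by (rule sum_abs)
  also have "\<dots> \<le> (\<Sum>S\<in>?F. 1)"
  proof (rule sum_mono)
    fix S
    have "0 \<le> util train D (S \<union> {i}) DT" "util train D (S \<union> {i}) DT \<le> 1"
         "0 \<le> util train D S DT" "util train D S DT \<le> 1"
      by (rule util_bounds)+
    then show "\<bar>util train D (S \<union> {i}) DT - util train D S DT\<bar> \<le> 1" by linarith
  qed
  also have "\<dots> = real ((n - 1) choose k)" using cardF by simp
  finally have h: "\<bar>?s\<bar> \<le> real ((n - 1) choose k)" .
  have md: "marg_contrib train n D i k DT = ?s / real ((n - 1) choose k)"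
    unfolding marg_contrib_def ..
  show ?thesis
  proof (cases "(n - 1) choose k = 0")
    case True then show ?thesis unfolding md by (simp only: True) simp
  next
    case False
    then have c: "real ((n - 1) choose k) > 0" by simp
    have "\<bar>?s / real ((n - 1) choose k)\<bar> = \<bar>?s\<bar> / real ((n - 1) choose k)"
      using c by (simp add: abs_divide)
    also have "\<dots> \<le> 1" using h c by (simp add: divide_le_eq)
    finally show ?thesis unfolding md .
  qed
qed

theorem theorem3p4:
  fixes P :: "('x \<times> 'y) measure"
    and train :: "('x \<times> 'y) multiset \<Rightarrow> ('x \<Rightarrow> 'y)"
    and n i :: nat and z :: "'x \<times> 'y" and DT :: "('x \<times> 'y) list"
  assumes "prob_space P"
    and "n \<ge> 1" and "i \<in> {1..n}"
    and "DT \<noteq> []"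
    and meas: "\<And>S. S \<subseteq> {1..n} \<Longrightarrow>
      (\<lambda>\<omega>. util train (fun_upd \<omega> i z) S DT) \<in> borel_measurable (train_space P n i)"
    and "consistently_helpful P train n i z DT \<or> consistently_harmful P train n i z DT"
  shows "((\<Sum>k<n. tau P train n i z DT k) / real n \<noteq> 0 \<longrightarrow>
           robust_beta P train n i z DT (\<lambda>D. g_Shap train n D i DT)
             \<le> ((\<Sum>k<n. delta P train n i z DT k) / real n)
                / ((\<Sum>k<n. tau P train n i z DT k) / real n)\<^sup>2)
       \<and> (tau P train n i z DT (n - 1) \<noteq> 0 \<longrightarrow>
           robust_beta P train n i z DT (\<lambda>D. g_LOO train n D i DT)
             \<le> delta P train n i z DT (n - 1) / (tau P train n i z DT (n - 1))\<^sup>2)"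
proof -
  define M where "M = train_space P n i"
  interpret M: prob_space M
    unfolding M_def train_space_def by (rule prob_space_PiM) (use assms(1) in simp)
  define X where "X k \<omega> = marg_contrib train n (fun_upd \<omega> i z) i k DT" for k \<omega>
  define t where "t k = tau P train n i z DT k" for k
  define d where "d k = delta P train n i z DT k" for k
  have t_eq: "t k = M.expectation (X k)" for k unfolding t_def tau_def X_def M_def by simp
  have d_eq: "d k = M.expectation (\<lambda>\<omega>. (X k \<omega> - t k)\<^sup>2)" for k
    unfolding d_def delta_def t_eq X_def M_def by simp
  have Xb: "\<bar>X k \<omega>\<bar> \<le> 1" for k \<omega> unfolding X_def by (rule marg_bound) (use assms(3) in simp)
  have Xm: "X k \<in> borel_measurable M" for k
  proof -
    have "(\<lambda>\<omega>. (\<Sum>S\<in>{S. S \<subseteq> {1..n} - {i} \<and> card S = k}.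
        util train (fun_upd \<omega> i z) (S \<union> {i}) DT - util train (fun_upd \<omega> i z) S DT)
        / real ((n - 1) choose k)) \<in> borel_measurable M"
      unfolding M_def
      by (intro borel_measurable_divide borel_measurable_sum borel_measurable_diff meas
          borel_measurable_const) (use assms(3) in auto)
    then show ?thesis unfolding X_def marg_contrib_def by simp
  qed
  have Xi: "integrable M (X k)" for k by (rule M.bdd_int[OF Xm]) (rule Xb)
  have Di: "integrable M (\<lambda>\<omega>. (X k \<omega> - c)\<^sup>2)" for k c
    by (rule M.bdd_int[where B="(1 + \<bar>c\<bar>)\<^sup>2"]) (use Xm sq_bound Xb in auto)
  have ne: "\<not> (consistently_helpful P train n i z DT) \<Longrightarrow> (\<forall>k<n. t k < 0)"
    using assms(6) unfolding consistently_harmful_def t_def by auto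
  have hp: "consistently_helpful P train n i z DT \<Longrightarrow> (\<forall>k<n. t k \<ge> 0)"
    unfolding consistently_helpful_def t_def by auto
  have sst: "sgn_star P train n i z DT = (if consistently_helpful P train n i z DT then 1 else -1)"
    unfolding sgn_star_def by simp
  have n0: "n > 0" using assms(2) by simp
  have rb: "robust_beta P train n i z DT g = M.prob {\<omega>\<in>space M. sgn_pm (g (fun_upd \<omega> i z)) \<noteq> sgn_star P train n i z DT}" for g
    unfolding robust_beta_def M_def by simp
  show ?thesis
  proof (intro conjI impI)
    define mu where "mu = (\<Sum>k<n. t k) / real n"
    assume nz: "(\<Sum>k<n. tau P train n i z DT k) / real n \<noteq> 0"
    then have nz': "mu \<noteq> 0" unfolding mu_def t_def by simp
    define f where "f \<omega> = (\<Sum>k<n. X k \<omega>) / real n" for \<omega>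
    have fm: "f \<in> borel_measurable M" unfolding f_def using Xm by measurable
    have fb: "\<bar>f \<omega>\<bar> \<le> 1" for \<omega>
    proof -
      have "\<bar>\<Sum>k<n. X k \<omega>\<bar> \<le> (\<Sum>k<n. \<bar>X k \<omega>\<bar>)" by (rule sum_abs)
      also have "\<dots> \<le> (\<Sum>k<n. 1)" by (rule sum_mono) (rule Xb)
      finally have "\<bar>\<Sum>k<n. X k \<omega>\<bar> \<le> real n" by simp
      then show ?thesis unfolding f_def using n0 by (simp add: divide_le_eq)
    qed
    have fe: "M.expectation f = mu"
      unfolding f_def mu_def t_eq using Xi by (simp add: Bochner_Integration.integral_sum)
    have V: "M.expectation (\<lambda>\<omega>. (f \<omega> - mu)\<^sup>2) \<le> (\<Sum>k<n. d k) / real n"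
    proof -
      have pw: "(f \<omega> - mu)\<^sup>2 \<le> (\<Sum>k<n. (X k \<omega> - t k)\<^sup>2) / real n" for \<omega>
      proof -
        have "f \<omega> - mu = (\<Sum>k<n. X k \<omega> - t k) / real n"
          unfolding f_def mu_def by (simp add: sum_subtractf diff_divide_distrib)
        then have "(f \<omega> - mu)\<^sup>2 = (\<Sum>k<n. X k \<omega> - t k)\<^sup>2 / (real n)\<^sup>2"
          by (simp add: power_divide)
        also have "\<dots> \<le> ((\<Sum>k<n. (X k \<omega> - t k)\<^sup>2) * real n) / (real n)\<^sup>2"
          using sum_squared_le_sum_of_squares[of "\<lambda>k. X k \<omega> - t k" "{..<n}"]
          by (simp add: divide_right_mono)
        also have "\<dots> = (\<Sum>k<n. (X k \<omega> - t k)\<^sup>2) / real n"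
          using n0 by (simp add: power2_eq_square)
        finally show ?thesis .
      qed
      have "M.expectation (\<lambda>\<omega>. (f \<omega> - mu)\<^sup>2) \<le> M.expectation (\<lambda>\<omega>. (\<Sum>k<n. (X k \<omega> - t k)\<^sup>2) / real n)"
      proof (rule integral_mono)
        show "integrable M (\<lambda>\<omega>. (f \<omega> - mu)\<^sup>2)"
          by (rule M.bdd_int[where B="(1 + \<bar>mu\<bar>)\<^sup>2"]) (use fm sq_bound fb in auto)
        show "integrable M (\<lambda>\<omega>. (\<Sum>k<n. (X k \<omega> - t k)\<^sup>2) / real n)"
          using Di by auto
      qed (rule pw)
      also have "\<dots> = (\<Sum>k<n. d k) / real n"
        unfolding d_eq using Di by (simp add: Bochner_Integration.integral_sum)
      finally show ?thesis .
    qed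
    have "M.prob {\<omega>\<in>space M. sgn_pm (f \<omega>) \<noteq> sgn_star P train n i z DT} \<le> ((\<Sum>k<n. d k) / real n) / mu\<^sup>2"
    proof (rule M.sign_err[OF fm _ fe[symmetric] nz' V])
      show "\<bar>f \<omega>\<bar> \<le> 1" for \<omega> by (rule fb)
      show "sgn_star P train n i z DT = 1" if "mu \<ge> 0"
      proof (cases "consistently_helpful P train n i z DT")
        case False
        have "(\<Sum>k<n. t k) < (\<Sum>k<n. 0)"
          by (rule sum_strict_mono) (use ne False n0 in auto)
        then have "(\<Sum>k<n. t k) < 0" by simp
        then have "mu < 0" unfolding mu_def using n0 by (simp add: divide_neg_pos)
        with that show ?thesis by simp
      qed (simp add: sst)
      show "sgn_star P train n i z DT = -1" if "mu < 0"
      proof (cases "consistently_helpful P train n i z DT")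
        case True
        then have "(\<Sum>k<n. t k) \<ge> 0" using hp by (intro sum_nonneg) auto
        then have "mu \<ge> 0" unfolding mu_def by simp
        with that show ?thesis by simp
      qed (simp add: sst)
    qed
    then show "robust_beta P train n i z DT (\<lambda>D. g_Shap train n D i DT)
             \<le> ((\<Sum>k<n. delta P train n i z DT k) / real n)
                / ((\<Sum>k<n. tau P train n i z DT k) / real n)\<^sup>2"
      unfolding rb g_Shap_def mu_def f_def X_def t_def d_def .
  next
    assume nz: "tau P train n i z DT (n - 1) \<noteq> 0"
    define mu where "mu = t (n - 1)"
    have nz': "mu \<noteq> 0" using nz unfolding mu_def t_def .
    have "M.prob {\<omega>\<in>space M. sgn_pm (X (n - 1) \<omega>) \<noteq> sgn_star P train n i z DT} \<le> d (n - 1) / mu\<^sup>2"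
    proof (rule M.sign_err[OF Xm _ _ nz'])
      show "\<bar>X (n - 1) \<omega>\<bar> \<le> 1" for \<omega> by (rule Xb)
      show "mu = M.expectation (X (n - 1))" unfolding mu_def t_eq ..
      show "M.expectation (\<lambda>x. (X (n - 1) x - mu)\<^sup>2) \<le> d (n - 1)" unfolding mu_def d_eq by simp
      show "sgn_star P train n i z DT = 1" if "mu \<ge> 0"
      proof (cases "consistently_helpful P train n i z DT")
        case False
        then have "mu < 0" using ne n0 unfolding mu_def by simp
        with that show ?thesis by simp
      qed (simp add: sst)
      show "sgn_star P train n i z DT = -1" if "mu < 0"
      proof (cases "consistently_helpful P train n i z DT")
        case True
        then have "mu \<ge> 0" unfolding mu_def using hp n0 by simp
        with that show ?thesis by simp
      qed (simp add: sst)
    qed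
    then show "robust_beta P train n i z DT (\<lambda>D. g_LOO train n D i DT)
             \<le> delta P train n i z DT (n - 1) / (tau P train n i z DT (n - 1))\<^sup>2"
      unfolding rb g_LOO_def mu_def X_def t_def d_def .
  qed
qed

end
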